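(* Let $\mathcal G$ be a finite connected groupoid and $\alpha=(S_g,\alpha_g)_{g\in\mathcal G}$ a unital group-type partial action of $\mathcal G$ on a ring $S=\bigoplus_{y\in\mathcal G_0}S_y$, with $S_g=S1_g$. Let $x\in\mathcal G_0$ and $\tau=\{\tau_y\}_{y\in\mathcal G_0}$ a transversal in $\mathcal G$ for $x$ with $S_{\tau_y^{-1}}=S_x$ and $S_{\tau_y}=S_y$ for all $y\in\mathcal G_0$, and put $\tau(g)=\tau_{t(g)}^{-1}g\tau_{s(g)}\in\mathcal G(x)$ for $g\in\mathcal G$. Every $a\in S$ can be written uniquely as $a=\sum_{y\in\mathcal G_0}\alpha_{\tau_y}(a_{x,y})$ with $a_{x,y}\in S_x$. Then $a\in S^{\alpha_{\mathcal G}}$ if and only if $$\alpha_{\tau(g)}\big(a_{x,s(g)}1_{\tau(g)^{-1}}\big)=a_{x,t(g)}1_{\tau(g)}\quad\text{for all }g\in\mathcal G.$$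
   Context: A groupoid is a small category with all morphisms invertible; $\mathcal G_0$ is the set of objects (identified with identity morphisms), $s(g),t(g)$ source and target, $\mathcal G(x,y)=\{g:s(g)=x,t(g)=y\}$, $\mathcal G(x)=\mathcal G(x,x)$ the isotropy group; $gh$ is defined iff $s(g)=t(h)$; connected means $\mathcal G(x,y)\neq\emptyset$ for all $x,y$. A partial action $\alpha=(S_g,\alpha_g)_{g\in\mathcal G}$ on a ring $S$: for each $g$, $S_{t(g)}$ is an ideal of $S$, $S_g$ an ideal of $S_{t(g)}$, $\alpha_g:S_{g^{-1}}\to S_g$ a ring isomorphism; $\alpha_x=\mathrm{id}_{S_x}$ for $x\in\mathcal G_0$; for composable $(g,h)$, $\alpha_h^{-1}(S_{g^{-1}}\cap S_h)\subseteq S_{(gh)^{-1}}$ and $\alpha_g\alpha_h(a)=\alpha_{gh}(a)$ there. Unital: $S_g=S1_g$ with $1_g$ a central idempotent. A transversal in $\mathcal G$ for $x$ is a family $\{\tau_y\}_{y\in\mathcal G_0}$ with $\tau_y\in\mathcal G(x,y)$ and $\tau_x=x$. For connected $\mathcal G$, $\alpha$ is group-type if there exist $x\in\mathcal G_0$ and a transversal $\tau$ for $x$ with $S_{\tau_y^{-1}}=S_x$ and $S_{\tau_y}=S_y$ for all $y$. The invariant subring is $S^{\alpha_{\mathcal G}}=\{a\in S:\alpha_g(a1_{g^{-1}})=a1_g\ \forall g\in\mathcal G\}$. *)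

theory Defs
  imports Main
begin

text \<open>A groupoid is given by a set G of morphisms (objects are identified with
identity morphisms), source s, target t, a composition m (m g h = gh, defined
when s g = t h) and an inversion i.\<close>

definition groupoid ::
  "'g set \<Rightarrow> ('g \<Rightarrow> 'g) \<Rightarrow> ('g \<Rightarrow> 'g) \<Rightarrow> ('g \<Rightarrow> 'g \<Rightarrow> 'g) \<Rightarrow> ('g \<Rightarrow> 'g) \<Rightarrow> bool" where
  "groupoid G s t m i \<longleftrightarrow>
     (\<forall>g\<in>G. s g \<in> G \<and> t g \<in> G \<and> s (s g) = s g \<and> t (s g) = s g
             \<and> s (t g) = t g \<and> t (t g) = t g) \<and>
     (\<forall>g\<in>G. \<forall>h\<in>G. s g = t h \<longrightarrow> m g h \<in> G \<and> s (m g h) = s h \<and> t (m g h) = t g) \<and>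
     (\<forall>g\<in>G. \<forall>h\<in>G. \<forall>k\<in>G. s g = t h \<longrightarrow> s h = t k \<longrightarrow> m (m g h) k = m g (m h k)) \<and>
     (\<forall>g\<in>G. m (t g) g = g \<and> m g (s g) = g) \<and>
     (\<forall>g\<in>G. i g \<in> G \<and> s (i g) = t g \<and> t (i g) = s g \<and> m g (i g) = t g \<and> m (i g) g = s g)"

definition objects :: "'g set \<Rightarrow> ('g \<Rightarrow> 'g) \<Rightarrow> 'g set" where
  "objects G s = s ` G"

definition connected_groupoid ::
  "'g set \<Rightarrow> ('g \<Rightarrow> 'g) \<Rightarrow> ('g \<Rightarrow> 'g) \<Rightarrow> bool" where
  "connected_groupoid G s t \<longleftrightarrow>
     (\<forall>x\<in>objects G s. \<forall>y\<in>objects G s. \<exists>g\<in>G. s g = x \<and> t g = y)"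

section \<open>Ideals in a ring (the ring S is the whole type 'r)\<close>

text \<open>I is an ideal of the subring J (J = UNIV means: ideal of S).\<close>
definition ideal_of :: "'r::ring set \<Rightarrow> 'r set \<Rightarrow> bool" where
  "ideal_of I J \<longleftrightarrow> I \<subseteq> J \<and> 0 \<in> I \<and>
     (\<forall>a\<in>I. \<forall>b\<in>I. a + b \<in> I \<and> a - b \<in> I) \<and>
     (\<forall>a\<in>I. \<forall>j\<in>J. j * a \<in> I \<and> a * j \<in> I)"

definition central_idempotent :: "'r::ring \<Rightarrow> bool" where
  "central_idempotent e \<longleftrightarrow> e * e = e \<and> (\<forall>a. a * e = e * a)"

definition partial_action ::
  "'g set \<Rightarrow> ('g \<Rightarrow> 'g) \<Rightarrow> ('g \<Rightarrow> 'g) \<Rightarrow> ('g \<Rightarrow> 'g \<Rightarrow> 'g) \<Rightarrow> ('g \<Rightarrow> 'g)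
   \<Rightarrow> ('g \<Rightarrow> 'r::ring set) \<Rightarrow> ('g \<Rightarrow> 'r \<Rightarrow> 'r) \<Rightarrow> bool" where
  "partial_action G s t m i Sg \<alpha> \<longleftrightarrow>
     (\<forall>g\<in>G. ideal_of (Sg (t g)) UNIV \<and> ideal_of (Sg g) (Sg (t g))) \<and>
     (\<forall>g\<in>G. bij_betw (\<alpha> g) (Sg (i g)) (Sg g) \<and>
            (\<forall>a\<in>Sg (i g). \<forall>b\<in>Sg (i g).
               \<alpha> g (a + b) = \<alpha> g a + \<alpha> g b \<and> \<alpha> g (a * b) = \<alpha> g a * \<alpha> g b)) \<and>
     (\<forall>x\<in>objects G s. \<forall>a\<in>Sg x. \<alpha> x a = a) \<and>
     (\<forall>g\<in>G. \<forall>h\<in>G. s g = t h \<longrightarrow>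
        (\<forall>a\<in>Sg (i h). \<alpha> h a \<in> Sg (i g) \<longrightarrow>
            a \<in> Sg (i (m g h)) \<and> \<alpha> g (\<alpha> h a) = \<alpha> (m g h) a))"

definition unital_partial_action ::
  "'g set \<Rightarrow> ('g \<Rightarrow> 'r::ring set) \<Rightarrow> ('g \<Rightarrow> 'r) \<Rightarrow> bool" where
  "unital_partial_action G Sg one \<longleftrightarrow>
     (\<forall>g\<in>G. central_idempotent (one g) \<and> Sg g = {a * one g | a. True})"

definition transversal ::
  "'g set \<Rightarrow> ('g \<Rightarrow> 'g) \<Rightarrow> ('g \<Rightarrow> 'g) \<Rightarrow> 'g \<Rightarrow> ('g \<Rightarrow> 'g) \<Rightarrow> bool" where
  "transversal G s t x \<tau> \<longleftrightarrow>
     (\<forall>y\<in>objects G s. \<tau> y \<in> G \<and> s (\<tau> y) = x \<and> t (\<tau> y) = y) \<and> \<tau> x = x"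

definition group_type ::
  "'g set \<Rightarrow> ('g \<Rightarrow> 'g) \<Rightarrow> ('g \<Rightarrow> 'g) \<Rightarrow> ('g \<Rightarrow> 'g) \<Rightarrow> ('g \<Rightarrow> 'r set) \<Rightarrow> bool" where
  "group_type G s t i Sg \<longleftrightarrow>
     (\<exists>x\<in>objects G s. \<exists>\<tau>. transversal G s t x \<tau> \<and>
        (\<forall>y\<in>objects G s. Sg (i (\<tau> y)) = Sg x \<and> Sg (\<tau> y) = Sg y))"

definition internal_direct_sum :: "'g set \<Rightarrow> ('g \<Rightarrow> 'r::ring set) \<Rightarrow> bool" where
  "internal_direct_sum Y Sg \<longleftrightarrow>
     (\<forall>a. \<exists>!f. (\<forall>y\<in>Y. f y \<in> Sg y) \<and> (\<forall>y. y \<notin> Y \<longrightarrow> f y = 0) \<and> a = (\<Sum>y\<in>Y. f y))"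

definition invariants ::
  "'g set \<Rightarrow> ('g \<Rightarrow> 'g) \<Rightarrow> ('g \<Rightarrow> 'r \<Rightarrow> 'r) \<Rightarrow> ('g \<Rightarrow> 'r::ring) \<Rightarrow> 'r set" where
  "invariants G i \<alpha> one = {a. \<forall>g\<in>G. \<alpha> g (a * one (i g)) = a * one g}"

end

theory Submission
  imports Defs
begin


locale PA =
  fixes G :: "'g set" and s t :: "'g \<Rightarrow> 'g" and m :: "'g \<Rightarrow> 'g \<Rightarrow> 'g" and i :: "'g \<Rightarrow> 'g"
    and Sg :: "'g \<Rightarrow> 'r::ring set" and \<alpha> :: "'g \<Rightarrow> 'r \<Rightarrow> 'r" and one :: "'g \<Rightarrow> 'r"
  assumes grp: "groupoid G s t m i" and pa: "partial_action G s t m i Sg \<alpha>"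
    and un: "unital_partial_action G Sg one"
begin

lemma G1: "\<forall>g\<in>G. s g \<in> G \<and> t g \<in> G \<and> s (s g) = s g \<and> t (s g) = s g
             \<and> s (t g) = t g \<and> t (t g) = t g"
  using grp unfolding groupoid_def by (elim conjE) assumption

lemma G2: "\<forall>g\<in>G. \<forall>h\<in>G. s g = t h \<longrightarrow> m g h \<in> G \<and> s (m g h) = s h \<and> t (m g h) = t g"
  using grp unfolding groupoid_def by (elim conjE) assumption

lemma G3: "\<forall>g\<in>G. \<forall>h\<in>G. \<forall>k\<in>G. s g = t h \<longrightarrow> s h = t k \<longrightarrow> m (m g h) k = m g (m h k)"
  using grp unfolding groupoid_def by (elim conjE) assumption

lemma G4: "\<forall>g\<in>G. m (t g) g = g \<and> m g (s g) = g"
  using grp unfolding groupoid_def by (elim conjE) assumption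

lemma G5: "\<forall>g\<in>G. i g \<in> G \<and> s (i g) = t g \<and> t (i g) = s g \<and> m g (i g) = t g \<and> m (i g) g = s g"
  using grp unfolding groupoid_def by (elim conjE) assumption

lemma sG: "g \<in> G \<Longrightarrow> s g \<in> G" and tG: "g \<in> G \<Longrightarrow> t g \<in> G"
  and ss: "g \<in> G \<Longrightarrow> s (s g) = s g" and ts: "g \<in> G \<Longrightarrow> t (s g) = s g"
  and st: "g \<in> G \<Longrightarrow> s (t g) = t g" and tt: "g \<in> G \<Longrightarrow> t (t g) = t g"
  using G1 by blast+

lemma mG: "g \<in> G \<Longrightarrow> h \<in> G \<Longrightarrow> s g = t h \<Longrightarrow> m g h \<in> G"
  and sm: "g \<in> G \<Longrightarrow> h \<in> G \<Longrightarrow> s g = t h \<Longrightarrow> s (m g h) = s h"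
  and tm: "g \<in> G \<Longrightarrow> h \<in> G \<Longrightarrow> s g = t h \<Longrightarrow> t (m g h) = t g"
  using G2 by blast+

lemma assoc: assumes "g\<in>G" "h\<in>G" "k\<in>G" "s g = t h" "s h = t k" shows "m (m g h) k = m g (m h k)"
  using G3 assms by blast

lemma lid: "g\<in>G \<Longrightarrow> m (t g) g = g" and rid: "g\<in>G \<Longrightarrow> m g (s g) = g"
  using G4 by blast+

lemma iG: "g\<in>G \<Longrightarrow> i g \<in> G" and si: "g\<in>G \<Longrightarrow> s (i g) = t g" and ti: "g\<in>G \<Longrightarrow> t (i g) = s g"
  and rinv: "g\<in>G \<Longrightarrow> m g (i g) = t g" and linv: "g\<in>G \<Longrightarrow> m (i g) g = s g"
  using G5 by blast+

lemma inv_unique: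
  assumes "a\<in>G" "b\<in>G" "s b = t a" "t b = s a" "m b a = s a" shows "b = i a"
proof -
  have "b = m b (t a)" using rid[OF assms(2)] assms(3) by simp
  also have "\<dots> = m b (m a (i a))" using assms rinv by simp
  also have "\<dots> = m (m b a) (i a)" using assoc[of b a "i a"] assms iG ti by simp
  also have "\<dots> = m (s a) (i a)" using assms by simp
  also have "\<dots> = i a" using lid[of "i a"] iG ti assms by simp
  finally show ?thesis .
qed

lemma ii: "g \<in> G \<Longrightarrow> i (i g) = g"
  using inv_unique[of "i g" g] iG ti si rinv by simp

lemma inv_m:
  assumes "g\<in>G" "h\<in>G" "s g = t h" shows "i (m g h) = m (i h) (i g)"
proof -
  have b: "m (i h) (i g) \<in> G" using assms mG iG si ti by simp
  have "m (m (i h) (i g)) (m g h) = m (i h) (m (i g) (m g h))"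
    using assoc[of "i h" "i g" "m g h"] assms mG iG si ti tm by simp
  also have "m (i g) (m g h) = m (m (i g) g) h"
    using assoc[of "i g" g h] assms iG si by simp
  also have "\<dots> = h" using assms linv lid by simp
  also have "m (i h) h = s h" using assms linv by simp
  finally have "m (m (i h) (i g)) (m g h) = s (m g h)" using assms sm by simp
  then show ?thesis
    using inv_unique[of "m g h" "m (i h) (i g)"] assms b mG iG si ti sm tm by simp
qed

lemma cancel:
  assumes "u\<in>G" "q\<in>G" "t q = t u" shows "m u (m (i u) q) = q"
proof -
  have "m u (m (i u) q) = m (m u (i u)) q"
    using assoc[of u "i u" q] assms iG si ti by simp
  also have "\<dots> = q" using assms rinv lid by metis
  finally show ?thesis .
qed

lemma hinv: assumes "g\<in>G" "h\<in>G" "s g = t h" shows "m h (i (m g h)) = i g"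
  using inv_m[OF assms] cancel[of h "i g"] assms iG ti by simp

lemma P1: "\<forall>g\<in>G. ideal_of (Sg (t g)) UNIV \<and> ideal_of (Sg g) (Sg (t g))"
  using pa unfolding partial_action_def by (elim conjE) assumption

lemma P2: "\<forall>g\<in>G. bij_betw (\<alpha> g) (Sg (i g)) (Sg g) \<and>
            (\<forall>a\<in>Sg (i g). \<forall>b\<in>Sg (i g).
               \<alpha> g (a + b) = \<alpha> g a + \<alpha> g b \<and> \<alpha> g (a * b) = \<alpha> g a * \<alpha> g b)"
  using pa unfolding partial_action_def by (elim conjE) assumption

lemma P3: "\<forall>x\<in>objects G s. \<forall>a\<in>Sg x. \<alpha> x a = a"
  using pa unfolding partial_action_def by (elim conjE) assumption

lemma P4: "\<forall>g\<in>G. \<forall>h\<in>G. s g = t h \<longrightarrow>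
        (\<forall>a\<in>Sg (i h). \<alpha> h a \<in> Sg (i g) \<longrightarrow>
            a \<in> Sg (i (m g h)) \<and> \<alpha> g (\<alpha> h a) = \<alpha> (m g h) a)"
  using pa unfolding partial_action_def by (elim conjE) assumption

lemma idl_t: "g\<in>G \<Longrightarrow> ideal_of (Sg (t g)) UNIV" and idl_g: "g\<in>G \<Longrightarrow> ideal_of (Sg g) (Sg (t g))"
  using P1 by blast+

lemma Sg_sub: "g\<in>G \<Longrightarrow> Sg g \<subseteq> Sg (t g)"
  using idl_g unfolding ideal_of_def by auto

lemma Sg_subI: "g\<in>G \<Longrightarrow> a \<in> Sg g \<Longrightarrow> a \<in> Sg (t g)"
  using Sg_sub by auto

lemma idl_mult: assumes "g\<in>G" "a \<in> Sg (t g)" shows "a * r \<in> Sg (t g) \<and> r * a \<in> Sg (t g)"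
proof -
  have "\<forall>a\<in>Sg (t g). \<forall>j\<in>UNIV. j * a \<in> Sg (t g) \<and> a * j \<in> Sg (t g)"
    using idl_t[OF assms(1)] unfolding ideal_of_def by (elim conjE) assumption
  then show ?thesis using assms by blast
qed

lemma zero_in: "g\<in>G \<Longrightarrow> 0 \<in> Sg (t g)"
  using idl_t unfolding ideal_of_def by blast

lemma bij: "g\<in>G \<Longrightarrow> bij_betw (\<alpha> g) (Sg (i g)) (Sg g)"
  using P2 by blast

lemma inj: "g\<in>G \<Longrightarrow> inj_on (\<alpha> g) (Sg (i g))" and img: "g\<in>G \<Longrightarrow> \<alpha> g ` Sg (i g) = Sg g"
  using bij unfolding bij_betw_def by auto

lemma into: "g\<in>G \<Longrightarrow> a \<in> Sg (i g) \<Longrightarrow> \<alpha> g a \<in> Sg g"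
  using img by blast

lemma hom_mult: assumes "g\<in>G" "a\<in>Sg (i g)" "b \<in> Sg (i g)" shows "\<alpha> g (a*b) = \<alpha> g a * \<alpha> g b"
proof -
  have "\<forall>g\<in>G. bij_betw (\<alpha> g) (Sg (i g)) (Sg g) \<and>
            (\<forall>a\<in>Sg (i g). \<forall>b\<in>Sg (i g).
               \<alpha> g (a + b) = \<alpha> g a + \<alpha> g b \<and> \<alpha> g (a * b) = \<alpha> g a * \<alpha> g b)"
    using pa unfolding partial_action_def by (elim conjE) assumption
  then show ?thesis using assms by blast
qed

lemma obj_id: "g\<in>G \<Longrightarrow> a \<in> Sg (s g) \<Longrightarrow> \<alpha> (s g) a = a"
  using P3 unfolding objects_def by blast

lemma comp: assumes "g\<in>G" "h\<in>G" "s g = t h" "a \<in> Sg (i h)" "\<alpha> h a \<in> Sg (i g)"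
  shows "a \<in> Sg (i (m g h)) \<and> \<alpha> g (\<alpha> h a) = \<alpha> (m g h) a"
proof -
  have "\<forall>g\<in>G. \<forall>h\<in>G. s g = t h \<longrightarrow>
        (\<forall>a\<in>Sg (i h). \<alpha> h a \<in> Sg (i g) \<longrightarrow>
            a \<in> Sg (i (m g h)) \<and> \<alpha> g (\<alpha> h a) = \<alpha> (m g h) a)"
    using pa unfolding partial_action_def by (elim conjE) assumption
  then show ?thesis using assms by blast
qed

lemma one_ci: "g\<in>G \<Longrightarrow> central_idempotent (one g)" and Sg_eq: "g\<in>G \<Longrightarrow> Sg g = {a * one g | a. True}"
  using un unfolding unital_partial_action_def by blast+

lemma mul_in: "g\<in>G \<Longrightarrow> a * one g \<in> Sg g"
  using Sg_eq by blast

lemma one_in: "g\<in>G \<Longrightarrow> one g \<in> Sg g"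
proof -
  assume g: "g \<in> G"
  have "one g * one g = one g" using one_ci[OF g] unfolding central_idempotent_def by blast
  then show ?thesis using mul_in[OF g, of "one g"] by simp
qed

lemma r_one: assumes "g\<in>G" "b \<in> Sg g" shows "b * one g = b"
proof -
  obtain a where "b = a * one g" using Sg_eq assms by blast
  then show ?thesis using one_ci[OF assms(1)] unfolding central_idempotent_def
    by (metis mult.assoc)
qed

lemma l_one: assumes "g\<in>G" "b \<in> Sg g" shows "one g * b = b"
proof -
  have "b * one g = one g * b" using one_ci[OF assms(1)] unfolding central_idempotent_def by blast
  then show ?thesis using r_one[OF assms] by simp
qed

lemma inv_cancel: assumes "g \<in> G" "a \<in> Sg (i g)" shows "\<alpha> (i g) (\<alpha> g a) = a"
proof -
  have "\<alpha> g a \<in> Sg (i (i g))" using into assms ii by simp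
  then have "\<alpha> (i g) (\<alpha> g a) = \<alpha> (m (i g) g) a"
    using comp[of "i g" g a] assms iG si by simp
  also have "\<dots> = a" using linv assms obj_id Sg_subI[of "i g" a] iG ti by simp
  finally show ?thesis .
qed

lemma Lmap: assumes "p\<in>G" "q\<in>G" "s p = t q" "b \<in> Sg (i p)" "b \<in> Sg q"
  shows "\<alpha> p b \<in> Sg (m p q)"
proof -
  have a1: "\<alpha> p b \<in> Sg (i (i p))" using into assms ii by simp
  have a2: "\<alpha> (i p) (\<alpha> p b) \<in> Sg (i (i q))" using inv_cancel assms ii by simp
  have "\<alpha> p b \<in> Sg (i (m (i q) (i p)))"
    using comp[OF iG[of q] iG[of p] _ a1 a2] assms si ti by simp
  also have "i (m (i q) (i p)) = m p q" using inv_m[of "i q" "i p"] assms iG si ti ii by simp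
  finally show ?thesis .
qed

lemma unit_transfer:
  assumes "p\<in>G" "A \<subseteq> Sg (i p)" "\<alpha> p ` A = B" "eA \<in> A" "\<forall>w\<in>A. eA * w = w"
    "eB \<in> B" "\<forall>b\<in>B. b * eB = b"
  shows "\<alpha> p eA = eB"
proof -
  have e: "\<alpha> p eA \<in> B" using assms by blast
  obtain w where w: "w \<in> A" "eB = \<alpha> p w" using assms by blast
  have "eA \<in> Sg (i p)" "w \<in> Sg (i p)" using assms w by auto
  then have "\<alpha> p eA * eB = \<alpha> p (eA * w)" using w(2) hom_mult[of p eA w] assms(1) by simp
  also have "\<dots> = eB" using w assms by simp
  finally have 1: "\<alpha> p eA * eB = eB" .
  have 2: "\<alpha> p eA * eB = \<alpha> p eA" using e assms(7) by blast
  from 1 2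
  show ?thesis by simp
qed

lemma key:
  assumes g: "g\<in>G" and h: "h\<in>G" and u: "u\<in>G" and sh: "s h = x0" and th: "t h = s g"
    and su: "s u = x0" and tu: "t u = t g"
    and Shi: "Sg (i h) = Sg x0" and Sh: "Sg h = Sg (s g)" and Sui: "Sg (i u) = Sg x0" and Su: "Sg u = Sg (t g)"
    and cy: "cy \<in> Sg x0" and cz: "cz \<in> Sg x0"
  shows "\<alpha> g (\<alpha> h cy * one (i g)) = \<alpha> u cz * one g \<longleftrightarrow>
         \<alpha> (m (i u) (m g h)) (cy * one (i (m (i u) (m g h)))) = cz * one (m (i u) (m g h))"
proof -
  define gh where "gh = m g h"
  define k where "k = m (i u) gh"
  have ghG: "gh \<in> G" and sgh: "s gh = x0" and tgh: "t gh = t g"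
    using mG sm tm g h th sh unfolding gh_def by auto
  have kG: "k \<in> G" and sk: "s k = x0" and tk: "t k = x0"
    using mG[of "i u" gh] sm[of "i u" gh] tm[of "i u" gh] iG[OF u] si[OF u] ti[OF u] ghG sgh tgh tu su
    unfolding k_def by auto
  have uk: "m u k = gh" unfolding k_def using cancel[OF u ghG] tgh tu by simp
  have Sik: "Sg (i k) \<subseteq> Sg x0" using Sg_sub[of "i k"] iG[OF kG] ti[OF kG] sk by simp
  have Sk: "Sg k \<subseteq> Sg x0" using Sg_sub[OF kG] tk by simp
  have Sig: "Sg (i g) \<subseteq> Sg (s g)" using Sg_sub[of "i g"] iG[OF g] ti[OF g] by simp
  have Sgt: "Sg g \<subseteq> Sg (t g)" using Sg_sub[OF g] .
  have F1: "w \<in> Sg (i k) \<longleftrightarrow> \<alpha> h w \<in> Sg (i g)" if w: "w \<in> Sg x0" for w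
  proof
    assume A: "\<alpha> h w \<in> Sg (i g)"
    have w1: "w \<in> Sg (i h)" using w Shi by simp
    have c1: "w \<in> Sg (i gh) \<and> \<alpha> g (\<alpha> h w) = \<alpha> gh w"
      using comp[OF g h _ w1 A] th unfolding gh_def by simp
    have "\<alpha> g (\<alpha> h w) \<in> Sg g" using into[OF g A] .
    then have "\<alpha> gh w \<in> Sg (i (i u))" using c1 Sgt Su ii[OF u] by auto
    then have "w \<in> Sg (i (m (i u) gh))"
      using comp[OF iG[OF u] ghG _ _] c1 si[OF u] tu tgh by simp
    then show "w \<in> Sg (i k)" unfolding k_def .
  next
    assume A: "w \<in> Sg (i k)"
    have "\<alpha> k w \<in> Sg (i u)" using into[OF kG A] Sk Sui by auto
    then have "w \<in> Sg (i (m u k))" using comp[OF u kG _ A] su tk by simp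
    then have w2: "w \<in> Sg (i gh)" using uk by simp
    have "\<alpha> h w \<in> Sg (m h (i gh))"
      using Lmap[OF h iG[OF ghG] _ _ w2] sh ti[OF ghG] sgh w Shi by simp
    also have "m h (i gh) = i g" unfolding gh_def using hinv[OF g h] th by simp
    finally show "\<alpha> h w \<in> Sg (i g)" .
  qed
  have F2: "\<alpha> g (\<alpha> h w) = \<alpha> u (\<alpha> k w)" if w: "w \<in> Sg (i k)" for w
  proof -
    have wx: "w \<in> Sg x0" using w Sik by auto
    have A: "\<alpha> h w \<in> Sg (i g)" using F1[OF wx] w by simp
    have "\<alpha> g (\<alpha> h w) = \<alpha> gh w"
      using comp[OF g h _ _ A] th wx Shi unfolding gh_def by simp
    moreover have "\<alpha> k w \<in> Sg (i u)" using into[OF kG w] Sk Sui by auto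
    then have "\<alpha> u (\<alpha> k w) = \<alpha> (m u k) w" using comp[OF u kG _ w] su tk by simp
    ultimately show ?thesis using uk by simp
  qed
  have ikG: "i k \<in> G" using iG[OF kG] .
  have igG: "i g \<in> G" using iG[OF g] .
  have F3: "\<alpha> h (one (i k)) = one (i g)"
  proof (rule unit_transfer[OF h])
    show "Sg (i k) \<subseteq> Sg (i h)" using Sik Shi by simp
    show "\<alpha> h ` Sg (i k) = Sg (i g)"
    proof
      show "\<alpha> h ` Sg (i k) \<subseteq> Sg (i g)" using F1 Sik by blast
      show "Sg (i g) \<subseteq> \<alpha> h ` Sg (i k)"
      proof
        fix b assume b: "b \<in> Sg (i g)"
        then have "b \<in> \<alpha> h ` Sg (i h)" using Sig Sh img[OF h] by auto
        then obtain w where w: "w \<in> Sg x0" "b = \<alpha> h w" using Shi by auto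
        then have "w \<in> Sg (i k)" using F1 b by simp
        then show "b \<in> \<alpha> h ` Sg (i k)" using w by blast
      qed
    qed
    show "one (i k) \<in> Sg (i k)" using one_in[OF ikG] .
    show "\<forall>w\<in>Sg (i k). one (i k) * w = w" using l_one[OF ikG] by blast
    show "one (i g) \<in> Sg (i g)" using one_in[OF igG] .
    show "\<forall>b\<in>Sg (i g). b * one (i g) = b" using r_one[OF igG] by blast
  qed
  have F4: "\<alpha> u (one k) = one g"
  proof (rule unit_transfer[OF u])
    show "Sg k \<subseteq> Sg (i u)" using Sk Sui by simp
    show "\<alpha> u ` Sg k = Sg g"
    proof
      show "\<alpha> u ` Sg k \<subseteq> Sg g"
      proof
        fix b assume "b \<in> \<alpha> u ` Sg k"
        then obtain v where v: "v \<in> Sg k" "b = \<alpha> u v" by blast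
        then obtain w where w: "w \<in> Sg (i k)" "v = \<alpha> k w" using img[OF kG] by blast
        have "w \<in> Sg x0" using w Sik by auto
        then have "\<alpha> h w \<in> Sg (i g)" using F1 w by simp
        then have "\<alpha> g (\<alpha> h w) \<in> Sg g" using into[OF g] by simp
        then show "b \<in> Sg g" using F2[OF w(1)] v w by simp
      qed
      show "Sg g \<subseteq> \<alpha> u ` Sg k"
      proof
        fix b assume "b \<in> Sg g"
        then obtain b' where b': "b' \<in> Sg (i g)" "b = \<alpha> g b'" using img[OF g] by blast
        then have "b' \<in> \<alpha> h ` Sg (i h)" using Sig Sh img[OF h] by auto
        then obtain w where w: "w \<in> Sg x0" "b' = \<alpha> h w" using Shi by auto
        then have wk: "w \<in> Sg (i k)" using F1 b' by simp
        then have "b = \<alpha> u (\<alpha> k w)" using F2 b' w by simp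
        moreover have "\<alpha> k w \<in> Sg k" using into[OF kG wk] .
        ultimately show "b \<in> \<alpha> u ` Sg k" by blast
      qed
    qed
    show "one k \<in> Sg k" using one_in[OF kG] .
    show "\<forall>w\<in>Sg k. one k * w = w" using l_one[OF kG] by blast
    show "one g \<in> Sg g" using one_in[OF g] .
    show "\<forall>b\<in>Sg g. b * one g = b" using r_one[OF g] by blast
  qed
  define w0 where "w0 = cy * one (i k)"
  have w0: "w0 \<in> Sg (i k)" unfolding w0_def using mul_in[OF ikG] .
  have oik: "one (i k) \<in> Sg (i h)" using one_in[OF ikG] Sik Shi by auto
  have "\<alpha> h cy * one (i g) = \<alpha> h w0"
    unfolding w0_def using hom_mult[OF h _ oik, of cy] cy Shi F3 by simp
  then have L: "\<alpha> g (\<alpha> h cy * one (i g)) = \<alpha> u (\<alpha> k w0)" using F2[OF w0] by simp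
  have ok: "one k \<in> Sg (i u)" using one_in[OF kG] Sk Sui by auto
  have R: "\<alpha> u cz * one g = \<alpha> u (cz * one k)"
    using hom_mult[OF u _ ok, of cz] cz Sui F4 by simp
  have m1: "\<alpha> k w0 \<in> Sg (i u)" using into[OF kG w0] Sk Sui by auto
  have m2: "cz * one k \<in> Sg (i u)" using idl_mult[OF kG, of cz "one k"] cz tk Sui by simp
  have "\<alpha> g (\<alpha> h cy * one (i g)) = \<alpha> u cz * one g \<longleftrightarrow> \<alpha> k w0 = cz * one k"
    unfolding L R using inj_onD[OF inj[OF u] _ m1 m2] by auto
  then show ?thesis unfolding w0_def k_def gh_def .
qed

end

lemma ds_disj:
  fixes Sg :: "'g \<Rightarrow> 'r::ring set"
  assumes ds: "internal_direct_sum Y Sg" and fin: "finite Y" and z0: "\<forall>y\<in>Y. 0 \<in> Sg y"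
    and y1: "y1 \<in> Y" and y2: "y2 \<in> Y" and ne: "y1 \<noteq> y2" and z1: "z \<in> Sg y1" and z2: "z \<in> Sg y2"
  shows "z = 0"
proof -
  define f1 where "f1 = (\<lambda>v. if v = y1 then z else (0::'r))"
  define f2 where "f2 = (\<lambda>v. if v = y2 then z else (0::'r))"
  have u: "\<exists>!f. (\<forall>y\<in>Y. f y \<in> Sg y) \<and> (\<forall>y. y \<notin> Y \<longrightarrow> f y = 0) \<and> z = (\<Sum>y\<in>Y. f y)"
    using ds unfolding internal_direct_sum_def by blast
  have p1: "(\<forall>y\<in>Y. f1 y \<in> Sg y) \<and> (\<forall>y. y \<notin> Y \<longrightarrow> f1 y = 0) \<and> z = (\<Sum>y\<in>Y. f1 y)"
    unfolding f1_def using z0 z1 y1 fin by (auto simp: sum.delta)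
  have p2: "(\<forall>y\<in>Y. f2 y \<in> Sg y) \<and> (\<forall>y. y \<notin> Y \<longrightarrow> f2 y = 0) \<and> z = (\<Sum>y\<in>Y. f2 y)"
    unfolding f2_def using z0 z2 y2 fin by (auto simp: sum.delta)
  have "f1 = f2" using u p1 p2 by blast
  then have "f1 y1 = f2 y1" by simp
  then show ?thesis unfolding f1_def f2_def using ne by simp
qed

theorem proposition3p1:
  fixes G :: "'g set" and s t :: "'g \<Rightarrow> 'g" and m :: "'g \<Rightarrow> 'g \<Rightarrow> 'g" and i :: "'g \<Rightarrow> 'g"
    and Sg :: "'g \<Rightarrow> 'r::ring set" and \<alpha> :: "'g \<Rightarrow> 'r \<Rightarrow> 'r" and one :: "'g \<Rightarrow> 'r"
    and x :: 'g and \<tau> :: "'g \<Rightarrow> 'g"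
  assumes "groupoid G s t m i" and "finite G" and "connected_groupoid G s t"
    and "partial_action G s t m i Sg \<alpha>"
    and "unital_partial_action G Sg one"
    and "group_type G s t i Sg"
    and "internal_direct_sum (objects G s) Sg"
    and "x \<in> objects G s" and "transversal G s t x \<tau>"
    and "\<forall>y\<in>objects G s. Sg (i (\<tau> y)) = Sg x \<and> Sg (\<tau> y) = Sg y"
  shows "(\<forall>a. \<exists>!c. (\<forall>y\<in>objects G s. c y \<in> Sg x) \<and> (\<forall>y. y \<notin> objects G s \<longrightarrow> c y = 0)
                 \<and> a = (\<Sum>y\<in>objects G s. \<alpha> (\<tau> y) (c y)))
       \<and> (\<forall>a c. (\<forall>y\<in>objects G s. c y \<in> Sg x) \<and> (\<forall>y. y \<notin> objects G s \<longrightarrow> c y = 0)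
                 \<and> a = (\<Sum>y\<in>objects G s. \<alpha> (\<tau> y) (c y)) \<longrightarrow>
           (a \<in> invariants G i \<alpha> one \<longleftrightarrow>
             (\<forall>g\<in>G. let \<tau>g = m (i (\<tau> (t g))) (m g (\<tau> (s g))) in
                \<alpha> \<tau>g (c (s g) * one (i \<tau>g)) = c (t g) * one \<tau>g)))"
proof -
  interpret P: PA G s t m i Sg \<alpha> one using assms(1,4,5) by unfold_locales
  define Y where "Y = objects G s"
  have fin: "finite Y" unfolding Y_def objects_def using assms(2) by simp
  have YG: "\<And>y. y \<in> Y \<Longrightarrow> y \<in> G \<and> s y = y \<and> t y = y"
    unfolding Y_def objects_def using P.sG P.ss P.ts by auto
  have sY: "\<And>g. g \<in> G \<Longrightarrow> s g \<in> Y" unfolding Y_def objects_def by simp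
  have tY: "\<And>g. g \<in> G \<Longrightarrow> t g \<in> Y" unfolding Y_def objects_def using P.tG P.st by (metis image_eqI)
  have z0: "\<forall>y\<in>Y. 0 \<in> Sg y" using YG P.zero_in by metis
  have ds: "internal_direct_sum Y Sg" using assms(7) unfolding Y_def .
  have tau: "\<And>y. y \<in> Y \<Longrightarrow> \<tau> y \<in> G \<and> s (\<tau> y) = x \<and> t (\<tau> y) = y"
    using assms(9) unfolding transversal_def Y_def by blast
  have tauS: "\<And>y. y \<in> Y \<Longrightarrow> Sg (i (\<tau> y)) = Sg x \<and> Sg (\<tau> y) = Sg y"
    using assms(10) unfolding Y_def by blast
  have bijy: "\<And>y. y \<in> Y \<Longrightarrow> bij_betw (\<alpha> (\<tau> y)) (Sg x) (Sg y)"
    using P.bij tau tauS by metis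
  have part1: "\<exists>!c. (\<forall>y\<in>Y. c y \<in> Sg x) \<and> (\<forall>y. y \<notin> Y \<longrightarrow> c y = 0)
                 \<and> a = (\<Sum>y\<in>Y. \<alpha> (\<tau> y) (c y))" for a
  proof (rule ex_ex1I)
    obtain f where f: "\<forall>y\<in>Y. f y \<in> Sg y" "\<forall>y. y \<notin> Y \<longrightarrow> f y = 0" "a = (\<Sum>y\<in>Y. f y)"
      using ds unfolding internal_direct_sum_def by blast
    define c where "c y = (if y \<in> Y then the_inv_into (Sg x) (\<alpha> (\<tau> y)) (f y) else 0)" for y
    have "c y \<in> Sg x \<and> \<alpha> (\<tau> y) (c y) = f y" if y: "y \<in> Y" for y
      using bijy[OF y] f(1) y unfolding c_def bij_betw_def
      by (auto intro: the_inv_into_into f_the_inv_into_f)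
    then show "\<exists>c. (\<forall>y\<in>Y. c y \<in> Sg x) \<and> (\<forall>y. y \<notin> Y \<longrightarrow> c y = 0)
                 \<and> a = (\<Sum>y\<in>Y. \<alpha> (\<tau> y) (c y))"
      using f(3) by (intro exI[of _ c]) (auto simp: c_def intro: sum.cong)
  next
    fix c1 c2
    assume c1: "(\<forall>y\<in>Y. c1 y \<in> Sg x) \<and> (\<forall>y. y \<notin> Y \<longrightarrow> c1 y = 0) \<and> a = (\<Sum>y\<in>Y. \<alpha> (\<tau> y) (c1 y))"
      and c2: "(\<forall>y\<in>Y. c2 y \<in> Sg x) \<and> (\<forall>y. y \<notin> Y \<longrightarrow> c2 y = 0) \<and> a = (\<Sum>y\<in>Y. \<alpha> (\<tau> y) (c2 y))"
    define f1 where "f1 y = (if y \<in> Y then \<alpha> (\<tau> y) (c1 y) else 0)" for y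
    define f2 where "f2 y = (if y \<in> Y then \<alpha> (\<tau> y) (c2 y) else 0)" for y
    have u: "\<exists>!f. (\<forall>y\<in>Y. f y \<in> Sg y) \<and> (\<forall>y. y \<notin> Y \<longrightarrow> f y = 0) \<and> a = (\<Sum>y\<in>Y. f y)"
      using ds unfolding internal_direct_sum_def by blast
    have p1: "(\<forall>y\<in>Y. f1 y \<in> Sg y) \<and> (\<forall>y. y \<notin> Y \<longrightarrow> f1 y = 0) \<and> a = (\<Sum>y\<in>Y. f1 y)"
      unfolding f1_def using c1 bijy by (auto simp: bij_betw_def intro: sum.cong)
    have p2: "(\<forall>y\<in>Y. f2 y \<in> Sg y) \<and> (\<forall>y. y \<notin> Y \<longrightarrow> f2 y = 0) \<and> a = (\<Sum>y\<in>Y. f2 y)"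
      unfolding f2_def using c2 bijy by (auto simp: bij_betw_def intro: sum.cong)
    have "f1 = f2" using u p1 p2 by blast
    show "c1 = c2"
    proof
      fix y show "c1 y = c2 y"
      proof (cases "y \<in> Y")
        case True
        then have "\<alpha> (\<tau> y) (c1 y) = \<alpha> (\<tau> y) (c2 y)" using \<open>f1 = f2\<close> unfolding f1_def f2_def by metis
        then show ?thesis using bijy[OF True] c1 c2 True unfolding bij_betw_def by (meson inj_onD)
      next
        case False then show ?thesis using c1 c2 by simp
      qed
    qed
  qed
  have part2: "a \<in> invariants G i \<alpha> one \<longleftrightarrow>
             (\<forall>g\<in>G. let \<tau>g = m (i (\<tau> (t g))) (m g (\<tau> (s g))) in
                \<alpha> \<tau>g (c (s g) * one (i \<tau>g)) = c (t g) * one \<tau>g)"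
    if c: "\<forall>y\<in>Y. c y \<in> Sg x" and a: "a = (\<Sum>y\<in>Y. \<alpha> (\<tau> y) (c y))" for a c
  proof -
    define f where "f y = \<alpha> (\<tau> y) (c y)" for y
    have fS: "f y \<in> Sg y" if "y \<in> Y" for y
      using bijy[OF that] c that unfolding f_def bij_betw_def by blast
    have proj: "a * e = f y0 * e" if y0: "y0 \<in> Y" and e: "e \<in> Sg y0" for e y0
    proof -
      have "a * e = (\<Sum>y\<in>Y. f y * e)" unfolding a f_def by (simp add: sum_distrib_right)
      also have "\<dots> = f y0 * e + (\<Sum>y\<in>Y - {y0}. f y * e)" using sum.remove[OF fin y0] .
      also have "(\<Sum>y\<in>Y - {y0}. f y * e) = 0"
      proof (rule sum.neutral, rule ballI)
        fix y assume y: "y \<in> Y - {y0}"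
        have "f y * e \<in> Sg y" using P.idl_mult[of y "f y" e] fS[of y] y YG[of y] by auto
        moreover have "f y * e \<in> Sg y0" using P.idl_mult[of y0 e "f y"] e y0 YG[of y0] by auto
        ultimately show "f y * e = 0" using ds_disj[OF ds fin z0, of y y0] y y0 by auto
      qed
      finally show ?thesis by simp
    qed
    have inv_iff: "a \<in> invariants G i \<alpha> one \<longleftrightarrow>
        (\<forall>g\<in>G. \<alpha> g (f (s g) * one (i g)) = f (t g) * one g)"
    proof -
      have "a * one (i g) = f (s g) * one (i g) \<and> a * one g = f (t g) * one g" if g: "g \<in> G" for g
      proof
        have "one (i g) \<in> Sg (s g)" using P.one_in[OF P.iG[OF g]] P.Sg_sub[OF P.iG[OF g]] P.ti[OF g] by auto
        then show "a * one (i g) = f (s g) * one (i g)" using proj sY g by blast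
        have "one g \<in> Sg (t g)" using P.one_in[OF g] P.Sg_sub[OF g] by auto
        then show "a * one g = f (t g) * one g" using proj tY g by blast
      qed
      then show ?thesis unfolding invariants_def by auto
    qed
    have per: "\<alpha> g (f (s g) * one (i g)) = f (t g) * one g \<longleftrightarrow>
        (let \<tau>g = m (i (\<tau> (t g))) (m g (\<tau> (s g))) in
                \<alpha> \<tau>g (c (s g) * one (i \<tau>g)) = c (t g) * one \<tau>g)" if g: "g \<in> G" for g
      unfolding f_def Let_def
      using P.key[OF g, of "\<tau> (s g)" "\<tau> (t g)" x "c (s g)" "c (t g)"]
        tau[OF sY[OF g]] tau[OF tY[OF g]] tauS[OF sY[OF g]] tauS[OF tY[OF g]] c sY[OF g] tY[OF g]
      by simp
    show ?thesis using inv_iff per by auto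
  qed
  show ?thesis using part1 part2 unfolding Y_def by blast
qed

end
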